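(* Let $h_1,\dots,h_p$ be bilinear forms on $V$. Then $$c(h_1\cdots h_p)=\sum_i(c\,h_i)\,h_1\cdots\hat h_i\cdots h_p-\sum_{i<j}(h_j\circ h_i+h_i\circ h_j)\,h_1\cdots\hat h_i\cdots\hat h_j\cdots h_p,$$ where a hat denotes omission. In particular, for a bilinear form $k$ on $V$, $$c\,k^p=p\,(c\,k)\,k^{p-1}-p(p-1)(k\circ k)\,k^{p-2}.$$
   Context: $(V,g)$ is a Euclidean real vector space of dimension $n$ with orthonormal basis $(e_i)$, identified with $V^*$ via $g$. Double forms: elements of $\bigoplus_{p,q}\Lambda^pV^*\otimes\Lambda^qV^*$, a $(p,q)$ double form viewed as a multilinear form $\omega(x_1,\dots,x_p;y_1,\dots,y_q)$ skew in the $x$'s and in the $y$'s; bilinear forms on $V$ are $(1,1)$ double forms. Exterior product: $(\theta_1\otimes\theta_2)(\theta_3\otimes\theta_4)=(\theta_1\wedge\theta_3)\otimes(\theta_2\wedge\theta_4)$, extended bilinearly ($k^0=1$). Composition product: $(\theta_1\otimes\theta_2)\circ(\theta_3\otimes\theta_4)=\langle\theta_1,\theta_4\rangle\theta_3\otimes\theta_2$, extended bilinearly (for bilinear forms this corresponds to composition of the associated endomorphisms). The contraction $c$ is $c\omega(x_1,\dots,x_{p-1};y_1,\dots,y_{q-1})=\sum_j\omega(e_j,x_1,\dots,x_{p-1};e_j,y_1,\dots,y_{q-1})$ ($c\omega=0$ if $p=0$ or $q=0$); for a bilinear form $h$, $c\,h$ is its trace. *)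

theory Defs
  imports "HOL-Analysis.Analysis"
begin

text \<open>A (p,q) double form on V is represented as a function of two lists of
vectors, meant to be evaluated on lists of lengths p and q (values on lists of
other lengths are irrelevant).\<close>

type_synonym 'v dform = "'v list \<Rightarrow> 'v list \<Rightarrow> real"

text \<open>Exterior product of a (p1,q1) double form with a (p2,q2) double form
(determinant convention: the product of 1-forms is their wedge with
(a \<and> b)(x,y) = a x b y - a y b x).  Written with the full antisymmetrization,
normalized by factorials (equal to the shuffle sum for skew forms).\<close>

definition dprod :: "nat \<Rightarrow> nat \<Rightarrow> 'v dform \<Rightarrow> 'v dform \<Rightarrow> 'v dform" where
  "dprod p1 q1 \<omega> \<theta> xs ys =
     (\<Sum>\<sigma>\<in>{\<sigma>. \<sigma> permutes {..<length xs}}. \<Sum>\<tau>\<in>{\<tau>. \<tau> permutes {..<length ys}}.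
        of_int (sign \<sigma> * sign \<tau>) *
        \<omega> (take p1 (permute_list \<sigma> xs)) (take q1 (permute_list \<tau> ys)) *
        \<theta> (drop p1 (permute_list \<sigma> xs)) (drop q1 (permute_list \<tau> ys)))
     / (fact p1 * fact (length xs - p1) * fact q1 * fact (length ys - q1))"

definition bf :: "('v \<Rightarrow> 'v \<Rightarrow> real) \<Rightarrow> 'v dform" where
  "bf h xs ys = h (xs ! 0) (ys ! 0)"

fun bprod :: "('v \<Rightarrow> 'v \<Rightarrow> real) list \<Rightarrow> 'v dform" where
  "bprod [] = (\<lambda>xs ys. 1)"
| "bprod (h # hs) = dprod 1 1 (bf h) (bprod hs)"

definition contr :: "nat \<Rightarrow> nat \<Rightarrow> ('v::euclidean_space) dform \<Rightarrow> 'v dform" where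
  "contr p q \<omega> xs ys =
     (if p = 0 \<or> q = 0 then 0 else (\<Sum>e\<in>Basis. \<omega> (e # xs) (e # ys)))"

definition btrace :: "(('v::euclidean_space) \<Rightarrow> 'v \<Rightarrow> real) \<Rightarrow> real" where
  "btrace h = (\<Sum>e\<in>Basis. h e e)"

text \<open>Composition product of bilinear forms:
(t1 \<otimes> t2) \<circ> (t3 \<otimes> t4) = <t1,t4> t3 \<otimes> t2, i.e.
(h \<circ> k)(x,y) = sum_j k(x,e_j) h(e_j,y).\<close>
definition bcomp :: "(('v::euclidean_space) \<Rightarrow> 'v \<Rightarrow> real) \<Rightarrow> ('v \<Rightarrow> 'v \<Rightarrow> real) \<Rightarrow> 'v \<Rightarrow> 'v \<Rightarrow> real" where
  "bcomp h k x y = (\<Sum>e\<in>Basis. k x e * h e y)"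

end

theory Submission
  imports Defs
begin


fun dl :: "nat \<Rightarrow> 'a list \<Rightarrow> 'a list" where
  "dl _ [] = []"
| "dl 0 (x#xs) = xs"
| "dl (Suc n) (x#xs) = x # dl n xs"

lemma length_dl[simp]: "length (dl a xs) = (if a < length xs then length xs - 1 else length xs)"
  by (induction a xs rule: dl.induct) auto

lemma nth_dl: "a < length xs \<Longrightarrow> k < length xs - 1 \<Longrightarrow> dl a xs ! k = xs ! (if k < a then k else Suc k)"
proof (induction a xs arbitrary: k rule: dl.induct)
  case (3 n x xs)
  then show ?case by (cases k) auto
qed auto

definition S :: "'a list \<Rightarrow> ('a \<Rightarrow> 'a \<Rightarrow> 'a list \<Rightarrow> real) \<Rightarrow> real" where
  "S xs G = (\<Sum>a<length xs. \<Sum>c<length xs - 1. (-1)^(a+c) * G (xs!a) (dl a xs ! c) (dl c (dl a xs)))"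

lemma S_Nil: "S [] G = 0" by (simp add: S_def)

lemma S_Cons: "S (x#xs) G = (\<Sum>c<length xs. (-1)^c * G x (xs!c) (dl c xs))
   - (\<Sum>a<length xs. (-1)^a * G (xs!a) x (dl a xs)) + S xs (\<lambda>u v R. G u v (x#R))"
proof (cases xs)
  case Nil
  then show ?thesis by (simp add: S_def)
next
  case (Cons y ys)
  define n where "n = length ys"
  have ln: "length xs = Suc n" using Cons n_def by simp
  have "S (x#xs) G = (\<Sum>c<Suc n. (-1)^c * G x (xs!c) (dl c xs))
     + (\<Sum>a<Suc n. \<Sum>c<Suc n. (-1)^(Suc a+c) * G (xs!a) (dl (Suc a) (x#xs) ! c) (dl c (dl (Suc a) (x#xs))))"
  proof -
    have "S (x#xs) G = (\<Sum>a<Suc (Suc n). \<Sum>c<Suc n. (-1)^(a+c) * G ((x#xs)!a) (dl a (x#xs) ! c) (dl c (dl a (x#xs))))"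
      unfolding S_def using ln by simp
    also have "\<dots> = (\<Sum>c<Suc n. (-1)^(0+c) * G ((x#xs)!0) (dl 0 (x#xs) ! c) (dl c (dl 0 (x#xs))))
       + (\<Sum>a<Suc n. \<Sum>c<Suc n. (-1)^(Suc a+c) * G ((x#xs)!Suc a) (dl (Suc a) (x#xs) ! c) (dl c (dl (Suc a) (x#xs))))"
      by (rule sum.lessThan_Suc_shift)
    finally show ?thesis by simp
  qed
  also have "(\<Sum>a<Suc n. \<Sum>c<Suc n. (-1)^(Suc a+c) * G (xs!a) (dl (Suc a) (x#xs) ! c) (dl c (dl (Suc a) (x#xs))))
     = (\<Sum>a<Suc n. (- ((-1)^a * G (xs!a) x (dl a xs))) + (\<Sum>c<n. (-1)^(a+c) * G (xs!a) (dl a xs ! c) (x # dl c (dl a xs))))"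
  proof (rule sum.cong[OF refl])
    fix a assume a: "a \<in> {..<Suc n}"
    show "(\<Sum>c<Suc n. (-1)^(Suc a+c) * G (xs!a) (dl (Suc a) (x#xs) ! c) (dl c (dl (Suc a) (x#xs))))
      = (- ((-1)^a * G (xs!a) x (dl a xs))) + (\<Sum>c<n. (-1)^(a+c) * G (xs!a) (dl a xs ! c) (x # dl c (dl a xs)))"
    proof -
      have "(\<Sum>c<Suc n. (-1)^(Suc a+c) * G (xs!a) (dl (Suc a) (x#xs) ! c) (dl c (dl (Suc a) (x#xs))))
        = (-1)^(Suc a+0) * G (xs!a) (dl (Suc a) (x#xs) ! 0) (dl 0 (dl (Suc a) (x#xs))) +
          (\<Sum>c<n. (-1)^(Suc a+Suc c) * G (xs!a) (dl (Suc a) (x#xs) ! Suc c) (dl (Suc c) (dl (Suc a) (x#xs))))"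
        by (rule sum.lessThan_Suc_shift)
      then show ?thesis by simp
    qed
  qed
  also have "\<dots> = - (\<Sum>a<Suc n. (-1)^a * G (xs!a) x (dl a xs)) + S xs (\<lambda>u v R. G u v (x#R))"
    unfolding S_def ln by (simp add: sum.distrib sum_negf sum_subtractf)
  finally show ?thesis using ln by simp
qed

lemma DD: "S xs (\<lambda>u v R. G v u R) = - S xs G"
proof (induction xs arbitrary: G)
  case Nil
  then show ?case by (simp add: S_Nil)
next
  case (Cons x xs)
  have "S xs (\<lambda>u v R. G v u (x#R)) = - S xs (\<lambda>u v R. G u v (x#R))"
    using Cons.IH[of "\<lambda>u v R. G u v (x#R)"] by simp
  then show ?case by (simp add: S_Cons)
qed

lemma swap3: "(\<Sum>a\<in>A. \<Sum>b\<in>B. \<Sum>j\<in>J. g a b j) = (\<Sum>j\<in>J. \<Sum>b\<in>B. \<Sum>a\<in>A. g a b j)"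
proof -
  have "(\<Sum>a\<in>A. \<Sum>b\<in>B. \<Sum>j\<in>J. g a b j) = (\<Sum>b\<in>B. \<Sum>a\<in>A. \<Sum>j\<in>J. g a b j)" by (rule sum.swap)
  also have "\<dots> = (\<Sum>b\<in>B. \<Sum>j\<in>J. \<Sum>a\<in>A. g a b j)" by (rule sum.cong[OF refl], rule sum.swap)
  also have "\<dots> = (\<Sum>j\<in>J. \<Sum>b\<in>B. \<Sum>a\<in>A. g a b j)" by (rule sum.swap)
  finally show ?thesis .
qed

fun F :: "('v \<Rightarrow> 'v \<Rightarrow> real) list \<Rightarrow> 'v list \<Rightarrow> 'v list \<Rightarrow> real" where
  "F [] xs ys = (if xs = [] \<and> ys = [] then 1 else 0)"
| "F (h#hs) xs ys = (\<Sum>a<length xs. \<Sum>b<length ys. (-1)^(a+b) * h (xs!a) (ys!b) * F hs (dl a xs) (dl b ys))"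

lemma F_transp: "F hs xs ys = F (map (\<lambda>h x y. h y x) hs) ys xs"
proof (induction hs arbitrary: xs ys)
  case (Cons h hs)
  show ?case by (simp add: Cons.IH sum.swap[of _ "{..<length xs}"] add.commute mult.commute)
qed auto

lemma F_col: "F hs xs (w#zs) = (\<Sum>j<length hs. \<Sum>a<length xs. (-1)^a * (hs!j) (xs!a) w * F (dl j hs) (dl a xs) zs)"
proof (induction hs arbitrary: xs zs)
  case Nil
  then show ?case by simp
next
  case (Cons h hs)
  define n where "n = length xs"
  define m where "m = length zs"
  define q where "q = length hs"
  define G where "G j b = (\<lambda>u v R. h u (zs!b) * (hs!j) v w * F (dl j hs) R (dl b zs))" for j b
  have L: "F (h#hs) xs (w#zs) = (\<Sum>a<n. (-1)^a * h (xs!a) w * F hs (dl a xs) zs)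
     + (\<Sum>a<n. \<Sum>b<m. (-1)^(a+Suc b) * h (xs!a) (zs!b) * F hs (dl a xs) (w # dl b zs))"
    by (simp add: n_def m_def sum.lessThan_Suc_shift sum.distrib del: sum.lessThan_Suc)
  have "(\<Sum>a<n. \<Sum>b<m. (-1)^(a+Suc b) * h (xs!a) (zs!b) * F hs (dl a xs) (w # dl b zs))
     = (\<Sum>a<n. \<Sum>b<m. \<Sum>j<q. (- ((-1)^b)) * (\<Sum>c<n-1. (-1)^(a+c) * G j b (xs!a) (dl a xs ! c) (dl c (dl a xs))))"
  proof (intro sum.cong refl)
    fix a b assume a: "a \<in> {..<n}" and b: "b \<in> {..<m}"
    have la: "length (dl a xs) = n - 1" using a n_def by simp
    show "(-1)^(a+Suc b) * h (xs!a) (zs!b) * F hs (dl a xs) (w # dl b zs)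
      = (\<Sum>j<q. (- ((-1)^b)) * (\<Sum>c<n-1. (-1)^(a+c) * G j b (xs!a) (dl a xs ! c) (dl c (dl a xs))))"
      unfolding Cons.IH la G_def q_def
      by (simp add: sum_distrib_left power_add mult_ac)
  qed
  also have "\<dots> = (\<Sum>j<q. \<Sum>b<m. (- ((-1)^b)) * S xs (G j b))"
    unfolding S_def n_def[symmetric] by (subst swap3) (simp add: sum_distrib_left)
  finally have L2: "(\<Sum>a<n. \<Sum>b<m. (-1)^(a+Suc b) * h (xs!a) (zs!b) * F hs (dl a xs) (w # dl b zs))
     = (\<Sum>j<q. \<Sum>b<m. (- ((-1)^b)) * S xs (G j b))" .
  have "(\<Sum>j<q. \<Sum>a<n. (-1)^a * (hs!j) (xs!a) w * F (h # dl j hs) (dl a xs) zs)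
     = (\<Sum>j<q. \<Sum>a<n. \<Sum>b<m. (-1)^b * (\<Sum>c<n-1. (-1)^(a+c) * G j b (dl a xs ! c) (xs!a) (dl c (dl a xs))))"
  proof (intro sum.cong refl)
    fix j a assume a: "a \<in> {..<n}"
    have la: "length (dl a xs) = n - 1" using a n_def by simp
    show "(-1)^a * (hs!j) (xs!a) w * F (h # dl j hs) (dl a xs) zs
      = (\<Sum>b<m. (-1)^b * (\<Sum>c<n-1. (-1)^(a+c) * G j b (dl a xs ! c) (xs!a) (dl c (dl a xs))))"
      unfolding F.simps la G_def m_def
      by (simp add: sum_distrib_left power_add mult_ac) (rule trans[OF sum.swap], simp only: mult.left_commute)
  qed
  also have "\<dots> = (\<Sum>j<q. \<Sum>b<m. (-1)^b * S xs (\<lambda>u v R. G j b v u R))"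
    unfolding S_def n_def[symmetric] by (rule sum.cong[OF refl], rule trans[OF sum.swap], simp add: sum_distrib_left)
  also have "\<dots> = (\<Sum>j<q. \<Sum>b<m. (- ((-1)^b)) * S xs (G j b))"
    by (simp add: DD[of xs "G j b" for j b])
  finally have R2: "(\<Sum>j<q. \<Sum>a<n. (-1)^a * (hs!j) (xs!a) w * F (h # dl j hs) (dl a xs) zs) = (\<Sum>j<q. \<Sum>b<m. (- ((-1)^b)) * S xs (G j b))" .
  show ?case
    unfolding L L2 using R2 by (simp add: n_def q_def sum.lessThan_Suc_shift del: sum.lessThan_Suc)
qed

lemma dl_map: "dl j (map f l) = map f (dl j l)"
  by (induction j l rule: dl.induct) auto

lemma F_row: "F hs (w#zs) ys = (\<Sum>j<length hs. \<Sum>b<length ys. (-1)^b * (hs!j) w (ys!b) * F (dl j hs) zs (dl b ys))"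
proof -
  have "F hs (w#zs) ys = F (map (\<lambda>h x y. h y x) hs) ys (w#zs)" by (rule F_transp)
  also have "\<dots> = (\<Sum>j<length hs. \<Sum>b<length ys. (-1)^b * (hs!j) w (ys!b) * F (map (\<lambda>h x y. h y x) (dl j hs)) (dl b ys) zs)"
    by (simp add: F_col dl_map)
  also have "\<dots> = (\<Sum>j<length hs. \<Sum>b<length ys. (-1)^b * (hs!j) w (ys!b) * F (dl j hs) zs (dl b ys))"
    by (simp add: F_transp[of "dl j hs" zs for j b, symmetric])
  finally show ?thesis .
qed

lemma F_Cons_S: "F (g#h#r) xs ys = S xs (\<lambda>u v R. S ys (\<lambda>u' v' R'. g u u' * h v v' * F r R R'))"
proof -
  define n where "n = length xs"
  define p where "p = length ys"
  have "F (g#h#r) xs ys = (\<Sum>a<n. \<Sum>b<p. (-1)^(a+b) * g (xs!a) (ys!b) *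
     (\<Sum>c<n-1. \<Sum>d<p-1. (-1)^(c+d) * h (dl a xs ! c) (dl b ys ! d) * F r (dl c (dl a xs)) (dl d (dl b ys))))"
    unfolding n_def p_def F.simps(2) by (intro sum.cong refl) auto
  also have "\<dots> = (\<Sum>a<n. \<Sum>c<n-1. (-1)^(a+c) * (\<Sum>b<p. \<Sum>d<p-1. (-1)^(b+d) *
      (g (xs!a) (ys!b) * h (dl a xs ! c) (dl b ys ! d) * F r (dl c (dl a xs)) (dl d (dl b ys)))))"
  proof (rule sum.cong[OF refl])
    fix a
    have "(\<Sum>b<p. (-1)^(a+b) * g (xs!a) (ys!b) *
     (\<Sum>c<n-1. \<Sum>d<p-1. (-1)^(c+d) * h (dl a xs ! c) (dl b ys ! d) * F r (dl c (dl a xs)) (dl d (dl b ys))))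
     = (\<Sum>b<p. \<Sum>c<n-1. (-1)^(a+c) * (\<Sum>d<p-1. (-1)^(b+d) *
      (g (xs!a) (ys!b) * h (dl a xs ! c) (dl b ys ! d) * F r (dl c (dl a xs)) (dl d (dl b ys)))))"
      by (intro sum.cong refl) (simp add: sum_distrib_left power_add mult_ac)
    also have "\<dots> = (\<Sum>c<n-1. \<Sum>b<p. (-1)^(a+c) * (\<Sum>d<p-1. (-1)^(b+d) *
      (g (xs!a) (ys!b) * h (dl a xs ! c) (dl b ys ! d) * F r (dl c (dl a xs)) (dl d (dl b ys)))))"
      by (rule sum.swap)
    also have "\<dots> = (\<Sum>c<n-1. (-1)^(a+c) * (\<Sum>b<p. \<Sum>d<p-1. (-1)^(b+d) *
      (g (xs!a) (ys!b) * h (dl a xs ! c) (dl b ys ! d) * F r (dl c (dl a xs)) (dl d (dl b ys)))))"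
      by (simp add: sum_distrib_left)
    finally show "(\<Sum>b<p. (-1)^(a+b) * g (xs!a) (ys!b) *
     (\<Sum>c<n-1. \<Sum>d<p-1. (-1)^(c+d) * h (dl a xs ! c) (dl b ys ! d) * F r (dl c (dl a xs)) (dl d (dl b ys))))
     = (\<Sum>c<n-1. (-1)^(a+c) * (\<Sum>b<p. \<Sum>d<p-1. (-1)^(b+d) *
      (g (xs!a) (ys!b) * h (dl a xs ! c) (dl b ys ! d) * F r (dl c (dl a xs)) (dl d (dl b ys)))))" .
  qed
  also have "\<dots> = S xs (\<lambda>u v R. S ys (\<lambda>u' v' R'. g u u' * h v v' * F r R R'))"
    unfolding S_def n_def p_def by simp
  finally show ?thesis .
qed

lemma F_swap: "F (g#h#r) xs ys = F (h#g#r) xs ys"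
proof -
  have "F (g#h#r) xs ys = - S xs (\<lambda>u v R. S ys (\<lambda>u' v' R'. g v u' * h u v' * F r R R'))"
    unfolding F_Cons_S using DD[of xs "\<lambda>u v R. S ys (\<lambda>u' v' R'. g u u' * h v v' * F r R R')"] by simp
  also have "\<dots> = S xs (\<lambda>u v R. S ys (\<lambda>u' v' R'. h u u' * g v v' * F r R R'))"
  proof -
    have "\<And>u v R. S ys (\<lambda>u' v' R'. g v u' * h u v' * F r R R') = - S ys (\<lambda>u' v' R'. h u u' * g v v' * F r R R')"
      using DD[of ys "\<lambda>u' v' R'. h u u' * g v v' * F r R R'" for u v R] by (simp add: mult_ac)
    then show ?thesis by (simp add: S_def sum_negf)
  qed
  also have "\<dots> = F (h#g#r) xs ys" unfolding F_Cons_S ..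
  finally show ?thesis .
qed

lemma F_lin: "F ((\<lambda>x y. g1 x y + g2 x y) # r) xs ys = F (g1#r) xs ys + F (g2#r) xs ys"
  by (simp add: sum.distrib[symmetric] algebra_simps)

lemma P1:
  fixes c d :: "nat \<Rightarrow> real"
  shows "(\<Sum>e\<in>E. \<Sum>b\<in>B. c b * f e b * (\<Sum>j\<in>J. \<Sum>a\<in>A. d a * g j a e * \<Phi> j a b))
    = (\<Sum>j\<in>J. \<Sum>e\<in>E. \<Sum>a\<in>A. \<Sum>b\<in>B. c b * d a * (g j a e * f e b) * \<Phi> j a b)"
proof -
  have "(\<Sum>e\<in>E. \<Sum>b\<in>B. c b * f e b * (\<Sum>j\<in>J. \<Sum>a\<in>A. d a * g j a e * \<Phi> j a b))
     = (\<Sum>e\<in>E. \<Sum>b\<in>B. \<Sum>j\<in>J. \<Sum>a\<in>A. c b * d a * (g j a e * f e b) * \<Phi> j a b)"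
    by (simp add: sum_distrib_left mult_ac)
  also have "\<dots> = (\<Sum>e\<in>E. \<Sum>j\<in>J. \<Sum>b\<in>B. \<Sum>a\<in>A. c b * d a * (g j a e * f e b) * \<Phi> j a b)"
    by (rule sum.cong[OF refl], rule sum.swap)
  also have "\<dots> = (\<Sum>e\<in>E. \<Sum>j\<in>J. \<Sum>a\<in>A. \<Sum>b\<in>B. c b * d a * (g j a e * f e b) * \<Phi> j a b)"
    by (rule sum.cong[OF refl], rule sum.cong[OF refl], rule sum.swap)
  also have "\<dots> = (\<Sum>j\<in>J. \<Sum>e\<in>E. \<Sum>a\<in>A. \<Sum>b\<in>B. c b * d a * (g j a e * f e b) * \<Phi> j a b)"
    by (rule sum.swap)
  finally show ?thesis .
qed

lemma P2:
  fixes c d :: "nat \<Rightarrow> real"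
  shows "(\<Sum>e\<in>E. \<Sum>a\<in>A. d a * f a e * (\<Sum>j\<in>J. \<Sum>b\<in>B. c b * g j e b * \<Phi> j a b))
    = (\<Sum>j\<in>J. \<Sum>e\<in>E. \<Sum>a\<in>A. \<Sum>b\<in>B. c b * d a * (f a e * g j e b) * \<Phi> j a b)"
proof -
  have "(\<Sum>e\<in>E. \<Sum>a\<in>A. d a * f a e * (\<Sum>j\<in>J. \<Sum>b\<in>B. c b * g j e b * \<Phi> j a b))
     = (\<Sum>e\<in>E. \<Sum>a\<in>A. \<Sum>j\<in>J. \<Sum>b\<in>B. c b * d a * (f a e * g j e b) * \<Phi> j a b)"
    by (simp add: sum_distrib_left mult_ac)
  also have "\<dots> = (\<Sum>e\<in>E. \<Sum>j\<in>J. \<Sum>a\<in>A. \<Sum>b\<in>B. c b * d a * (f a e * g j e b) * \<Phi> j a b)"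
    by (rule sum.cong[OF refl], rule sum.swap)
  also have "\<dots> = (\<Sum>j\<in>J. \<Sum>e\<in>E. \<Sum>a\<in>A. \<Sum>b\<in>B. c b * d a * (f a e * g j e b) * \<Phi> j a b)"
    by (rule sum.swap)
  finally show ?thesis .
qed

lemma swapK: "(\<Sum>a\<in>A. \<Sum>j\<in>J. \<Sum>i\<in>K j. g a j i) = (\<Sum>j\<in>J. \<Sum>i\<in>K j. \<Sum>a\<in>A. g a j i)"
proof -
  have "(\<Sum>a\<in>A. \<Sum>j\<in>J. \<Sum>i\<in>K j. g a j i) = (\<Sum>j\<in>J. \<Sum>a\<in>A. \<Sum>i\<in>K j. g a j i)" by (rule sum.swap)
  also have "\<dots> = (\<Sum>j\<in>J. \<Sum>i\<in>K j. \<Sum>a\<in>A. g a j i)" by (rule sum.cong[OF refl], rule sum.swap)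
  finally show ?thesis .
qed

lemma P3:
  fixes c :: "nat \<Rightarrow> nat \<Rightarrow> real"
  shows "(\<Sum>a\<in>A. \<Sum>b\<in>B. c a b * ((\<Sum>i\<in>I. t i * Fi i a b) - (\<Sum>j\<in>J. \<Sum>i\<in>K j. G j i a b)))
    = (\<Sum>i\<in>I. t i * (\<Sum>a\<in>A. \<Sum>b\<in>B. c a b * Fi i a b)) - (\<Sum>j\<in>J. \<Sum>i\<in>K j. \<Sum>a\<in>A. \<Sum>b\<in>B. c a b * G j i a b)"
proof -
  have 1: "(\<Sum>a\<in>A. \<Sum>b\<in>B. c a b * (\<Sum>i\<in>I. t i * Fi i a b)) = (\<Sum>i\<in>I. t i * (\<Sum>a\<in>A. \<Sum>b\<in>B. c a b * Fi i a b))"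
  proof -
    have "(\<Sum>a\<in>A. \<Sum>b\<in>B. c a b * (\<Sum>i\<in>I. t i * Fi i a b)) = (\<Sum>a\<in>A. \<Sum>b\<in>B. \<Sum>i\<in>I. t i * (c a b * Fi i a b))"
      by (simp add: sum_distrib_left mult_ac)
    also have "\<dots> = (\<Sum>a\<in>A. \<Sum>i\<in>I. \<Sum>b\<in>B. t i * (c a b * Fi i a b))"
      by (rule sum.cong[OF refl], rule sum.swap)
    also have "\<dots> = (\<Sum>i\<in>I. \<Sum>a\<in>A. \<Sum>b\<in>B. t i * (c a b * Fi i a b))" by (rule sum.swap)
    finally show ?thesis by (simp add: sum_distrib_left)
  qed
  have 2: "(\<Sum>a\<in>A. \<Sum>b\<in>B. c a b * (\<Sum>j\<in>J. \<Sum>i\<in>K j. G j i a b)) = (\<Sum>j\<in>J. \<Sum>i\<in>K j. \<Sum>a\<in>A. \<Sum>b\<in>B. c a b * G j i a b)"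
  proof -
    have "(\<Sum>a\<in>A. \<Sum>b\<in>B. c a b * (\<Sum>j\<in>J. \<Sum>i\<in>K j. G j i a b)) = (\<Sum>a\<in>A. \<Sum>b\<in>B. \<Sum>j\<in>J. \<Sum>i\<in>K j. c a b * G j i a b)"
      by (simp add: sum_distrib_left)
    also have "\<dots> = (\<Sum>a\<in>A. \<Sum>j\<in>J. \<Sum>i\<in>K j. \<Sum>b\<in>B. c a b * G j i a b)"
      by (rule sum.cong[OF refl], rule swapK)
    also have "\<dots> = (\<Sum>j\<in>J. \<Sum>i\<in>K j. \<Sum>a\<in>A. \<Sum>b\<in>B. c a b * G j i a b)" by (rule swapK)
    finally show ?thesis .
  qed
  show ?thesis using 1 2 by (simp add: right_diff_distrib sum_subtractf)
qed

lemma F_bcomp: "F (bcomp h k # r) xs ys = (\<Sum>e\<in>Basis. \<Sum>a<length xs. \<Sum>b<length ys.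
    (-1)^(a+b) * (k (xs!a) e * h e (ys!b)) * F r (dl a xs) (dl b ys))"
proof -
  have "F (bcomp h k # r) xs ys = (\<Sum>a<length xs. \<Sum>b<length ys. \<Sum>e\<in>Basis.
    (-1)^(a+b) * (k (xs!a) e * h e (ys!b)) * F r (dl a xs) (dl b ys))"
    by (simp add: bcomp_def sum_distrib_left sum_distrib_right mult_ac)
  also have "\<dots> = (\<Sum>e\<in>Basis. \<Sum>b<length ys. \<Sum>a<length xs.
    (-1)^(a+b) * (k (xs!a) e * h e (ys!b)) * F r (dl a xs) (dl b ys))" by (rule swap3)
  also have "\<dots> = (\<Sum>e\<in>Basis. \<Sum>a<length xs. \<Sum>b<length ys.
    (-1)^(a+b) * (k (xs!a) e * h e (ys!b)) * F r (dl a xs) (dl b ys))" by (rule sum.cong[OF refl], rule sum.swap)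
  finally show ?thesis .
qed

lemma F_decomp: "F (h#r) (e#xs) (e#ys) = h e e * F r xs ys
  + (\<Sum>b<length ys. - ((-1)^b) * h e (ys!b) * F r xs (e # dl b ys))
  + (\<Sum>a<length xs. - ((-1)^a) * h (xs!a) e * F r (e # dl a xs) ys)
  + (\<Sum>a<length xs. \<Sum>b<length ys. (-1)^(a+b) * h (xs!a) (ys!b) * F r (e # dl a xs) (e # dl b ys))"
  by (simp add: sum.lessThan_Suc_shift sum.distrib del: sum.lessThan_Suc)

lemma F_contr: "(\<Sum>e\<in>Basis. F hs (e#xs) (e#ys)) = (\<Sum>i<length hs. btrace (hs!i) * F (dl i hs) xs ys)
  - (\<Sum>j<length hs. \<Sum>i<j. F ((\<lambda>x y. bcomp (hs!j) (hs!i) x y + bcomp (hs!i) (hs!j) x y) # dl i (dl j hs)) xs ys)"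
proof (induction hs arbitrary: xs ys)
  case Nil
  then show ?case by simp
next
  case (Cons h r)
  define n where "n = length xs"
  define p where "p = length ys"
  define q where "q = length r"
  define g where "g j i = (\<lambda>x y. bcomp (r!j) (r!i) x y + bcomp (r!i) (r!j) x y)" for j i
  have A: "(\<Sum>e\<in>Basis. h e e * F r xs ys) = btrace h * F r xs ys"
    by (simp add: btrace_def sum_distrib_right)
  have B: "(\<Sum>e\<in>Basis. \<Sum>b<p. - ((-1)^b) * h e (ys!b) * F r xs (e # dl b ys))
     = - (\<Sum>j<q. F (bcomp h (r!j) # dl j r) xs ys)"
  proof -
    have "(\<Sum>e\<in>Basis. \<Sum>b<p. - ((-1)^b) * h e (ys!b) * F r xs (e # dl b ys))
      = (\<Sum>e\<in>Basis. \<Sum>b<p. - ((-1)^b) * h e (ys!b) * (\<Sum>j<q. \<Sum>a<n. (-1)^a * (r!j) (xs!a) e * F (dl j r) (dl a xs) (dl b ys)))"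
      by (simp add: F_col n_def q_def)
    also have "\<dots> = (\<Sum>j<q. \<Sum>e\<in>Basis. \<Sum>a<n. \<Sum>b<p. - ((-1)^b) * (-1)^a * ((r!j) (xs!a) e * h e (ys!b)) * F (dl j r) (dl a xs) (dl b ys))"
      by (rule P1)
    also have "\<dots> = - (\<Sum>j<q. F (bcomp h (r!j) # dl j r) xs ys)"
      unfolding F_bcomp by (simp add: n_def p_def sum_negf power_add mult_ac)
    finally show ?thesis .
  qed
  have C: "(\<Sum>e\<in>Basis. \<Sum>a<n. - ((-1)^a) * h (xs!a) e * F r (e # dl a xs) ys)
     = - (\<Sum>j<q. F (bcomp (r!j) h # dl j r) xs ys)"
  proof -
    have "(\<Sum>e\<in>Basis. \<Sum>a<n. - ((-1)^a) * h (xs!a) e * F r (e # dl a xs) ys)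
      = (\<Sum>e\<in>Basis. \<Sum>a<n. - ((-1)^a) * h (xs!a) e * (\<Sum>j<q. \<Sum>b<p. (-1)^b * (r!j) e (ys!b) * F (dl j r) (dl a xs) (dl b ys)))"
      by (simp add: F_row p_def q_def)
    also have "\<dots> = (\<Sum>j<q. \<Sum>e\<in>Basis. \<Sum>a<n. \<Sum>b<p. (-1)^b * - ((-1)^a) * (h (xs!a) e * (r!j) e (ys!b)) * F (dl j r) (dl a xs) (dl b ys))"
      by (rule P2)
    also have "\<dots> = - (\<Sum>j<q. F (bcomp (r!j) h # dl j r) xs ys)"
      unfolding F_bcomp by (simp add: n_def p_def sum_negf power_add mult_ac)
    finally show ?thesis .
  qed
  have D: "(\<Sum>e\<in>Basis. \<Sum>a<n. \<Sum>b<p. (-1)^(a+b) * h (xs!a) (ys!b) * F r (e # dl a xs) (e # dl b ys))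
     = (\<Sum>i<q. btrace (r!i) * F (h # dl i r) xs ys) - (\<Sum>j<q. \<Sum>i<j. F (g j i # h # dl i (dl j r)) xs ys)"
  proof -
    have "(\<Sum>e\<in>Basis. \<Sum>a<n. \<Sum>b<p. (-1)^(a+b) * h (xs!a) (ys!b) * F r (e # dl a xs) (e # dl b ys))
      = (\<Sum>b<p. \<Sum>a<n. \<Sum>e\<in>Basis. (-1)^(a+b) * h (xs!a) (ys!b) * F r (e # dl a xs) (e # dl b ys))"
      by (rule swap3)
    also have "\<dots> = (\<Sum>a<n. \<Sum>b<p. \<Sum>e\<in>Basis. (-1)^(a+b) * h (xs!a) (ys!b) * F r (e # dl a xs) (e # dl b ys))"
      by (rule sum.swap)
    also have "\<dots> = (\<Sum>a<n. \<Sum>b<p. ((-1)^(a+b) * h (xs!a) (ys!b)) * ((\<Sum>i<q. btrace (r!i) * F (dl i r) (dl a xs) (dl b ys))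
         - (\<Sum>j<q. \<Sum>i<j. F (g j i # dl i (dl j r)) (dl a xs) (dl b ys))))"
      by (simp add: sum_distrib_left[symmetric] Cons.IH g_def q_def)
    also have "\<dots> = (\<Sum>i<q. btrace (r!i) * (\<Sum>a<n. \<Sum>b<p. ((-1)^(a+b) * h (xs!a) (ys!b)) * F (dl i r) (dl a xs) (dl b ys)))
         - (\<Sum>j<q. \<Sum>i<j. \<Sum>a<n. \<Sum>b<p. ((-1)^(a+b) * h (xs!a) (ys!b)) * F (g j i # dl i (dl j r)) (dl a xs) (dl b ys))"
      by (rule P3)
    also have "\<dots> = (\<Sum>i<q. btrace (r!i) * F (h # dl i r) xs ys) - (\<Sum>j<q. \<Sum>i<j. F (h # g j i # dl i (dl j r)) xs ys)"
      by (simp add: n_def p_def mult.assoc)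
    also have "\<dots> = (\<Sum>i<q. btrace (r!i) * F (h # dl i r) xs ys) - (\<Sum>j<q. \<Sum>i<j. F (g j i # h # dl i (dl j r)) xs ys)"
      by (simp only: F_swap[of h "g j i" for j i])
    finally show ?thesis .
  qed
  have L: "(\<Sum>e\<in>Basis. F (h#r) (e#xs) (e#ys)) = btrace h * F r xs ys - (\<Sum>j<q. F (bcomp h (r!j) # dl j r) xs ys)
     - (\<Sum>j<q. F (bcomp (r!j) h # dl j r) xs ys)
     + ((\<Sum>i<q. btrace (r!i) * F (h # dl i r) xs ys) - (\<Sum>j<q. \<Sum>i<j. F (g j i # h # dl i (dl j r)) xs ys))"
    unfolding F_decomp sum.distrib A using B C D by (simp add: n_def p_def)
  have R1: "(\<Sum>i<length (h#r). btrace ((h#r)!i) * F (dl i (h#r)) xs ys) = btrace h * F r xs ys + (\<Sum>i<q. btrace (r!i) * F (h # dl i r) xs ys)"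
    by (simp add: q_def sum.lessThan_Suc_shift del: sum.lessThan_Suc)
  have R2: "(\<Sum>j<length (h#r). \<Sum>i<j. F ((\<lambda>x y. bcomp ((h#r)!j) ((h#r)!i) x y + bcomp ((h#r)!i) ((h#r)!j) x y) # dl i (dl j (h#r))) xs ys)
     = (\<Sum>j<q. F (bcomp (r!j) h # dl j r) xs ys + F (bcomp h (r!j) # dl j r) xs ys + (\<Sum>i<j. F (g j i # h # dl i (dl j r)) xs ys))"
    by (simp add: q_def g_def F_lin sum.lessThan_Suc_shift del: sum.lessThan_Suc F.simps)
  show ?case unfolding R1 R2 L by (simp add: sum.distrib del: F.simps)
qed

definition sh :: "(nat \<Rightarrow> nat) \<Rightarrow> nat \<Rightarrow> nat" where
  "sh p = (\<lambda>i. if i = 0 then 0 else Suc (p (i - 1)))"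

lemma sh_0[simp]: "sh p 0 = 0" and sh_Suc[simp]: "sh p (Suc i) = Suc (p i)"
  by (simp_all add: sh_def)

lemma sh_id: "sh id = id"
  by (auto simp: sh_def fun_eq_iff)

lemma sh_swap: "sh (Transposition.transpose a b \<circ> p) = Transposition.transpose (Suc a) (Suc b) \<circ> sh p"
  by (auto simp: sh_def fun_eq_iff Transposition.transpose_def)

lemma sh_perm: assumes "p permutes {..<m}" shows "sh p permutes {..<Suc m} \<and> sign (sh p) = sign p"
  using assms finite_lessThan
proof (induction rule: permutes_induct)
  case id
  show ?case by (simp only: sh_id permutes_id sign_id simp_thms)
  case (swap a b p)
  have pp: "permutation p" using swap.hyps(4) permutes_imp_permutation by blast
  have ps: "permutation (sh p)" using swap.IH permutes_imp_permutation by blast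
  have "Transposition.transpose (Suc a) (Suc b) \<circ> sh p permutes {..<Suc m}"
    using swap by (intro permutes_compose permutes_swap_id) auto
  moreover have "sign (Transposition.transpose (Suc a) (Suc b) \<circ> sh p) = sign (Transposition.transpose a b \<circ> p)"
    using swap pp ps by (simp add: sign_compose sign_swap_id permutation_swap_id)
  ultimately show ?case by (simp only: sh_swap simp_thms)
qed

fun cc :: "nat \<Rightarrow> nat \<Rightarrow> nat" where
  "cc 0 = id"
| "cc (Suc a) = Transposition.transpose a (Suc a) \<circ> cc a"

lemma cc_eval: "cc a j = (if j = 0 then a else if j \<le> a then j - 1 else j)"
  by (induction a arbitrary: j) (auto simp: Transposition.transpose_def)

lemma cc_perm: "a < Suc m \<Longrightarrow> cc a permutes {..<Suc m} \<and> sign (cc a) = (-1)^a"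
proof (induction a)
  case 0
  show ?case by (simp only: cc.simps(1) permutes_id sign_id power_0 simp_thms)
next
  case (Suc a)
  then have IH: "cc a permutes {..<Suc m}" "sign (cc a) = (-1)^a" by auto
  have "permutation (cc a)" using IH(1) permutes_imp_permutation by blast
  note pc = this
  have p1: "Transposition.transpose a (Suc a) \<circ> cc a permutes {..<Suc m}"
    by (rule permutes_compose[OF IH(1)], rule permutes_swap_id) (use Suc.prems in auto)
  have "sign (Transposition.transpose a (Suc a) \<circ> cc a) = sign (Transposition.transpose a (Suc a)) * sign (cc a)"
    by (rule sign_compose[OF permutation_swap_id pc])
  then have "sign (Transposition.transpose a (Suc a) \<circ> cc a) = (-1)^(Suc a)"
    using IH(2) by (simp add: sign_swap_id)
  then show ?case using p1 by (simp only: cc.simps(2) simp_thms)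
qed

lemma SPLIT: "(\<Sum>\<sigma>\<in>{\<sigma>. \<sigma> permutes {..<Suc m}}. G \<sigma>) = (\<Sum>a<Suc m. \<Sum>\<rho>\<in>{\<rho>. \<rho> permutes {..<m}}. G (cc a \<circ> sh \<rho>))"
proof -
  define A where "A = {..<Suc m} \<times> {\<rho>. \<rho> permutes {..<m}}"
  define \<Phi> where "\<Phi> = (\<lambda>(a::nat, \<rho>). cc a \<circ> sh \<rho>)"
  have inj: "inj_on \<Phi> A"
  proof (rule inj_onI)
    fix u v assume u: "u \<in> A" and v: "v \<in> A" and e: "\<Phi> u = \<Phi> v"
    obtain a \<rho> where ua: "u = (a, \<rho>)" by (cases u)
    obtain b \<pi> where vb: "v = (b, \<pi>)" by (cases v)
    have "(cc a \<circ> sh \<rho>) 0 = (cc b \<circ> sh \<pi>) 0" using e by (simp add: \<Phi>_def ua vb)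
    then have ab: "a = b" by (simp add: cc_eval)
    have a: "a < Suc m" using u ua A_def by auto
    have ij: "inj (cc a)" using cc_perm[OF a] permutes_inj by blast
    have "\<And>i. (cc a \<circ> sh \<rho>) (Suc i) = (cc a \<circ> sh \<pi>) (Suc i)" using e ab by (simp add: \<Phi>_def ua vb)
    then have "\<And>i. cc a (sh \<rho> (Suc i)) = cc a (sh \<pi> (Suc i))" by simp
    then have "\<And>i. \<rho> i = \<pi> i" using ij by (metis injD sh_Suc Suc_inject)
    then show "u = v" using ua vb ab by auto
  qed
  have sub: "\<Phi> ` A \<subseteq> {\<sigma>. \<sigma> permutes {..<Suc m}}"
    using cc_perm sh_perm by (auto simp: A_def \<Phi>_def intro!: permutes_compose)
  have cA: "card A = fact (Suc m)"
    by (simp add: A_def card_cartesian_product card_permutations)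
  have eq: "\<Phi> ` A = {\<sigma>. \<sigma> permutes {..<Suc m}}"
    by (rule card_subset_eq[OF _ sub]) (simp_all add: finite_permutations card_image[OF inj] cA card_permutations)
  have "(\<Sum>\<sigma>\<in>{\<sigma>. \<sigma> permutes {..<Suc m}}. G \<sigma>) = (\<Sum>u\<in>A. G (\<Phi> u))"
    unfolding eq[symmetric] by (simp add: sum.reindex[OF inj])
  also have "\<dots> = (\<Sum>a<Suc m. \<Sum>\<rho>\<in>{\<rho>. \<rho> permutes {..<m}}. G (cc a \<circ> sh \<rho>))"
    unfolding A_def \<Phi>_def by (simp add: sum.cartesian_product split_def)
  finally show ?thesis .
qed

definition D :: "('v \<Rightarrow> 'v \<Rightarrow> real) list \<Rightarrow> 'v list \<Rightarrow> 'v list \<Rightarrow> real" where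
  "D hs xs ys = (\<Sum>\<sigma>\<in>{\<sigma>. \<sigma> permutes {..<length xs}}. \<Sum>\<tau>\<in>{\<tau>. \<tau> permutes {..<length ys}}.
     of_int (sign \<sigma> * sign \<tau>) * (\<Prod>i<length hs. (hs!i) (xs ! \<sigma> i) (ys ! \<tau> i)))"

lemma cs_facts:
  assumes a: "a < Suc m" and r: "\<rho> permutes {..<m}" and l: "length xs = Suc m"
  shows "xs ! (cc a \<circ> sh \<rho>) 0 = xs ! a"
    and "i < m \<Longrightarrow> xs ! (cc a \<circ> sh \<rho>) (Suc i) = dl a xs ! \<rho> i"
    and "sign (cc a \<circ> sh \<rho>) = (-1)^a * sign \<rho>"
proof -
  show "xs ! (cc a \<circ> sh \<rho>) 0 = xs ! a" by (simp add: cc_eval)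
  show "i < m \<Longrightarrow> xs ! (cc a \<circ> sh \<rho>) (Suc i) = dl a xs ! \<rho> i"
  proof -
    assume i: "i < m"
    have "\<rho> i < m" using permutes_in_image[OF r] i by simp
    then show ?thesis using a l by (simp add: cc_eval nth_dl)
  qed
  have p1: "permutation (cc a)" using cc_perm[OF a] permutes_imp_permutation by blast
  have p2: "permutation (sh \<rho>)" using sh_perm[OF r] permutes_imp_permutation by blast
  show "sign (cc a \<circ> sh \<rho>) = (-1)^a * sign \<rho>"
    using sign_compose[OF p1 p2] cc_perm[OF a] sh_perm[OF r] by simp
qed

lemma D_laplace:
  assumes lx: "length xs = Suc m" and ly: "length ys = Suc m" and lh: "length hs = m"
  shows "D (h#hs) xs ys = (\<Sum>a<Suc m. \<Sum>b<Suc m. (-1)^(a+b) * h (xs!a) (ys!b) * D hs (dl a xs) (dl b ys))"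
proof -
  define P where "P = {\<rho>. \<rho> permutes {..<m}}"
  define X where "X a b \<rho> \<pi> = of_int (sign \<rho> * sign \<pi>) * (\<Prod>i<m. (hs!i) (dl a xs ! \<rho> i) (dl b ys ! \<pi> i))" for a b \<rho> \<pi>
  have "D (h#hs) xs ys = (\<Sum>\<sigma>\<in>{\<sigma>. \<sigma> permutes {..<Suc m}}. \<Sum>\<tau>\<in>{\<tau>. \<tau> permutes {..<Suc m}}.
     of_int (sign \<sigma> * sign \<tau>) * (\<Prod>i<Suc m. ((h#hs)!i) (xs ! \<sigma> i) (ys ! \<tau> i)))"
    unfolding D_def lx ly by (simp only: length_Cons lh)
  also have "\<dots> = (\<Sum>a<Suc m. \<Sum>\<rho>\<in>P. \<Sum>b<Suc m. \<Sum>\<pi>\<in>P.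
     of_int (sign (cc a \<circ> sh \<rho>) * sign (cc b \<circ> sh \<pi>)) * (\<Prod>i<Suc m. ((h#hs)!i) (xs ! (cc a \<circ> sh \<rho>) i) (ys ! (cc b \<circ> sh \<pi>) i)))"
    unfolding P_def SPLIT ..
  also have "\<dots> = (\<Sum>a<Suc m. \<Sum>\<rho>\<in>P. \<Sum>b<Suc m. \<Sum>\<pi>\<in>P. ((-1)^(a+b) * h (xs!a) (ys!b)) * X a b \<rho> \<pi>)"
  proof (intro sum.cong refl)
    fix a \<rho> b \<pi> assume a: "a \<in> {..<Suc m}" and r: "\<rho> \<in> P" and b: "b \<in> {..<Suc m}" and p: "\<pi> \<in> P"
    have a': "a < Suc m" and b': "b < Suc m" and r': "\<rho> permutes {..<m}" and p': "\<pi> permutes {..<m}"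
      using a b r p by (auto simp: P_def)
    have pr: "(\<Prod>i<Suc m. ((h#hs)!i) (xs ! (cc a \<circ> sh \<rho>) i) (ys ! (cc b \<circ> sh \<pi>) i))
      = h (xs!a) (ys!b) * (\<Prod>i<m. (hs!i) (dl a xs ! \<rho> i) (dl b ys ! \<pi> i))"
      unfolding prod.lessThan_Suc_shift
      using cs_facts(1,2)[OF a' r' lx] cs_facts(1,2)[OF b' p' ly] by (simp del: o_apply)
    show "of_int (sign (cc a \<circ> sh \<rho>) * sign (cc b \<circ> sh \<pi>)) * (\<Prod>i<Suc m. ((h#hs)!i) (xs ! (cc a \<circ> sh \<rho>) i) (ys ! (cc b \<circ> sh \<pi>) i))
      = ((-1)^(a+b) * h (xs!a) (ys!b)) * X a b \<rho> \<pi>"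
      unfolding pr X_def cs_facts(3)[OF a' r' lx] cs_facts(3)[OF b' p' ly] by (simp add: power_add mult_ac)
  qed
  also have "\<dots> = (\<Sum>a<Suc m. \<Sum>b<Suc m. ((-1)^(a+b) * h (xs!a) (ys!b)) * (\<Sum>\<rho>\<in>P. \<Sum>\<pi>\<in>P. X a b \<rho> \<pi>))"
    by (rule sum.cong[OF refl], rule trans[OF sum.swap], simp add: sum_distrib_left)
  also have "\<dots> = (\<Sum>a<Suc m. \<Sum>b<Suc m. (-1)^(a+b) * h (xs!a) (ys!b) * D hs (dl a xs) (dl b ys))"
    by (intro sum.cong refl) (simp add: D_def X_def P_def lx ly lh)
  finally show ?thesis .
qed

lemma D_F: "length xs = length hs \<Longrightarrow> length ys = length hs \<Longrightarrow> D hs xs ys = F hs xs ys"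
proof (induction hs arbitrary: xs ys)
  case Nil
  then show ?case by (simp add: D_def)
next
  case (Cons h hs)
  have "D (h#hs) xs ys = (\<Sum>a<Suc (length hs). \<Sum>b<Suc (length hs). (-1)^(a+b) * h (xs!a) (ys!b) * D hs (dl a xs) (dl b ys))"
    using Cons.prems by (intro D_laplace) auto
  also have "\<dots> = F (h#hs) xs ys"
    using Cons.prems by (simp add: Cons.IH del: sum.lessThan_Suc)
  finally show ?case .
qed

lemma plist_nth: "i < length xs \<Longrightarrow> permute_list f xs ! i = xs ! f i"
  by (simp add: permute_list_def)

lemma bprod_D: "length xs = length hs \<Longrightarrow> length ys = length hs \<Longrightarrow> bprod hs xs ys = D hs xs ys"
proof (induction hs arbitrary: xs ys)
  case Nil
  then show ?case by (simp add: D_def)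
next
  case (Cons h hs)
  define m where "m = length hs"
  have lx: "length xs = Suc m" and ly: "length ys = Suc m" using Cons.prems m_def by auto
  define P where "P = {\<rho>. \<rho> permutes {..<m}}"
  define PS where "PS = {\<rho>. \<rho> permutes {..<Suc m}}"
  define f where "f \<sigma> \<tau> = of_int (sign \<sigma> * sign \<tau>) * (\<Prod>i<Suc m. ((h#hs)!i) (xs ! \<sigma> i) (ys ! \<tau> i))" for \<sigma> \<tau>
  have fin: "finite P" "finite PS" by (simp_all add: P_def PS_def finite_permutations)
  have cP: "card P = fact m" by (simp add: P_def card_permutations)
  have num: "(\<Sum>\<sigma>\<in>PS. \<Sum>\<tau>\<in>PS. of_int (sign \<sigma> * sign \<tau>) *
        bf h (take 1 (permute_list \<sigma> xs)) (take 1 (permute_list \<tau> ys)) *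
        bprod hs (drop 1 (permute_list \<sigma> xs)) (drop 1 (permute_list \<tau> ys)))
      = (\<Sum>\<sigma>\<in>PS. \<Sum>\<tau>\<in>PS. \<Sum>\<alpha>\<in>P. \<Sum>\<beta>\<in>P. f (\<sigma> \<circ> sh \<alpha>) (\<tau> \<circ> sh \<beta>))"
  proof (intro sum.cong refl)
    fix \<sigma> \<tau> assume s: "\<sigma> \<in> PS" and t: "\<tau> \<in> PS"
    have s': "\<sigma> permutes {..<Suc m}" using s by (simp add: PS_def)
    have t': "\<tau> permutes {..<Suc m}" using t by (simp add: PS_def)
    have ps: "permutation \<sigma>" "permutation \<tau>"
      using permutes_imp_permutation[OF finite_lessThan s'] permutes_imp_permutation[OF finite_lessThan t'] by auto
    have ld: "length (drop 1 (permute_list \<sigma> xs)) = m" "length (drop 1 (permute_list \<tau> ys)) = m" using lx ly by auto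
    have "bprod hs (drop 1 (permute_list \<sigma> xs)) (drop 1 (permute_list \<tau> ys))
       = D hs (drop 1 (permute_list \<sigma> xs)) (drop 1 (permute_list \<tau> ys))"
      using lx ly m_def by (intro Cons.IH) auto
    also have "\<dots> = (\<Sum>\<alpha>\<in>P. \<Sum>\<beta>\<in>P. of_int (sign \<alpha> * sign \<beta>) *
         (\<Prod>i<m. (hs!i) (xs ! \<sigma> (Suc (\<alpha> i))) (ys ! \<tau> (Suc (\<beta> i)))))"
      unfolding D_def ld P_def[symmetric]
    proof (intro sum.cong refl)
      fix \<alpha> \<beta> assume a: "\<alpha> \<in> P" and b: "\<beta> \<in> P"
      have a': "\<alpha> permutes {..<m}" and b': "\<beta> permutes {..<m}" using a b by (simp_all add: P_def)
      have "\<And>i. i < m \<Longrightarrow> \<alpha> i < m \<and> \<beta> i < m"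
        using permutes_in_image[OF a'] permutes_in_image[OF b'] by simp
      then show "of_int (sign \<alpha> * sign \<beta>) * (\<Prod>i<length hs. (hs!i) (drop 1 (permute_list \<sigma> xs) ! \<alpha> i) (drop 1 (permute_list \<tau> ys) ! \<beta> i))
         = of_int (sign \<alpha> * sign \<beta>) * (\<Prod>i<m. (hs!i) (xs ! \<sigma> (Suc (\<alpha> i))) (ys ! \<tau> (Suc (\<beta> i))))"
        using lx ly by (auto simp: m_def plist_nth nth_drop intro!: prod.cong)
    qed
    finally have bp: "bprod hs (drop 1 (permute_list \<sigma> xs)) (drop 1 (permute_list \<tau> ys)) = (\<Sum>\<alpha>\<in>P. \<Sum>\<beta>\<in>P. of_int (sign \<alpha> * sign \<beta>) *
         (\<Prod>i<m. (hs!i) (xs ! \<sigma> (Suc (\<alpha> i))) (ys ! \<tau> (Suc (\<beta> i)))))" .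
    have bfh: "bf h (take 1 (permute_list \<sigma> xs)) (take 1 (permute_list \<tau> ys)) = h (xs ! \<sigma> 0) (ys ! \<tau> 0)"
      using lx ly by (simp add: bf_def plist_nth nth_take)
    have ff: "f (\<sigma> \<circ> sh \<alpha>) (\<tau> \<circ> sh \<beta>) = of_int (sign \<sigma> * sign \<tau>) * h (xs ! \<sigma> 0) (ys ! \<tau> 0) * (of_int (sign \<alpha> * sign \<beta>) *
         (\<Prod>i<m. (hs!i) (xs ! \<sigma> (Suc (\<alpha> i))) (ys ! \<tau> (Suc (\<beta> i)))))"
      if a: "\<alpha> \<in> P" and b: "\<beta> \<in> P" for \<alpha> \<beta>
    proof -
      have a': "\<alpha> permutes {..<m}" and b': "\<beta> permutes {..<m}" using a b by (simp_all add: P_def)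
      have sa: "sh \<alpha> permutes {..<Suc m}" "sign (sh \<alpha>) = sign \<alpha>" using sh_perm[OF a'] by auto
      have sb: "sh \<beta> permutes {..<Suc m}" "sign (sh \<beta>) = sign \<beta>" using sh_perm[OF b'] by auto
      have "sign (\<sigma> \<circ> sh \<alpha>) = sign \<sigma> * sign \<alpha>" using sign_compose[OF ps(1) permutes_imp_permutation[OF finite_lessThan sa(1)]] sa(2) by simp
      moreover have "sign (\<tau> \<circ> sh \<beta>) = sign \<tau> * sign \<beta>" using sign_compose[OF ps(2) permutes_imp_permutation[OF finite_lessThan sb(1)]] sb(2) by simp
      ultimately show ?thesis unfolding f_def prod.lessThan_Suc_shift by (simp add: mult_ac)
    qed
    show "of_int (sign \<sigma> * sign \<tau>) *
        bf h (take 1 (permute_list \<sigma> xs)) (take 1 (permute_list \<tau> ys)) *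
        bprod hs (drop 1 (permute_list \<sigma> xs)) (drop 1 (permute_list \<tau> ys))
      = (\<Sum>\<alpha>\<in>P. \<Sum>\<beta>\<in>P. f (\<sigma> \<circ> sh \<alpha>) (\<tau> \<circ> sh \<beta>))"
      unfolding bp bfh by (simp add: ff sum_distrib_left cong: sum.cong)
  qed
  have reord: "(\<Sum>\<sigma>\<in>PS. \<Sum>\<tau>\<in>PS. \<Sum>\<alpha>\<in>P. \<Sum>\<beta>\<in>P. f (\<sigma> \<circ> sh \<alpha>) (\<tau> \<circ> sh \<beta>))
     = (\<Sum>\<alpha>\<in>P. \<Sum>\<beta>\<in>P. \<Sum>\<sigma>\<in>PS. \<Sum>\<tau>\<in>PS. f (\<sigma> \<circ> sh \<alpha>) (\<tau> \<circ> sh \<beta>))"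
  proof -
    have "(\<Sum>\<sigma>\<in>PS. \<Sum>\<tau>\<in>PS. \<Sum>\<alpha>\<in>P. \<Sum>\<beta>\<in>P. f (\<sigma> \<circ> sh \<alpha>) (\<tau> \<circ> sh \<beta>))
       = (\<Sum>\<sigma>\<in>PS. \<Sum>\<alpha>\<in>P. \<Sum>\<tau>\<in>PS. \<Sum>\<beta>\<in>P. f (\<sigma> \<circ> sh \<alpha>) (\<tau> \<circ> sh \<beta>))"
      by (rule sum.cong[OF refl], rule sum.swap)
    also have "\<dots> = (\<Sum>\<alpha>\<in>P. \<Sum>\<sigma>\<in>PS. \<Sum>\<tau>\<in>PS. \<Sum>\<beta>\<in>P. f (\<sigma> \<circ> sh \<alpha>) (\<tau> \<circ> sh \<beta>))"
      by (rule sum.swap)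
    also have "\<dots> = (\<Sum>\<alpha>\<in>P. \<Sum>\<sigma>\<in>PS. \<Sum>\<beta>\<in>P. \<Sum>\<tau>\<in>PS. f (\<sigma> \<circ> sh \<alpha>) (\<tau> \<circ> sh \<beta>))"
      by (rule sum.cong[OF refl], rule sum.cong[OF refl], rule sum.swap)
    also have "\<dots> = (\<Sum>\<alpha>\<in>P. \<Sum>\<beta>\<in>P. \<Sum>\<sigma>\<in>PS. \<Sum>\<tau>\<in>PS. f (\<sigma> \<circ> sh \<alpha>) (\<tau> \<circ> sh \<beta>))"
      by (rule sum.cong[OF refl], rule sum.swap)
    finally show ?thesis .
  qed
  have inv: "(\<Sum>\<sigma>\<in>PS. \<Sum>\<tau>\<in>PS. f (\<sigma> \<circ> sh \<alpha>) (\<tau> \<circ> sh \<beta>)) = D (h#hs) xs ys"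
    if a: "\<alpha> \<in> P" and b: "\<beta> \<in> P" for \<alpha> \<beta>
  proof -
    have a': "\<alpha> permutes {..<m}" and b': "\<beta> permutes {..<m}" using a b by (simp_all add: P_def)
    have sa: "sh \<alpha> permutes {..<Suc m}" using sh_perm[OF a'] by auto
    have sb: "sh \<beta> permutes {..<Suc m}" using sh_perm[OF b'] by auto
    have "(\<Sum>\<sigma>\<in>PS. \<Sum>\<tau>\<in>PS. f (\<sigma> \<circ> sh \<alpha>) (\<tau> \<circ> sh \<beta>)) = (\<Sum>\<sigma>\<in>PS. \<Sum>\<tau>\<in>PS. f (\<sigma> \<circ> sh \<alpha>) \<tau>)"
      unfolding PS_def by (rule sum.cong[OF refl], rule sum_permutations_compose_right[OF sb, symmetric])
    also have "\<dots> = (\<Sum>\<sigma>\<in>PS. \<Sum>\<tau>\<in>PS. f \<sigma> \<tau>)"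
      unfolding PS_def by (rule sum_permutations_compose_right[OF sa, symmetric])
    also have "\<dots> = D (h#hs) xs ys"
      unfolding D_def f_def PS_def lx ly by (simp only: length_Cons m_def)
    finally show ?thesis .
  qed
  have "bprod (h#hs) xs ys = (\<Sum>\<sigma>\<in>PS. \<Sum>\<tau>\<in>PS. \<Sum>\<alpha>\<in>P. \<Sum>\<beta>\<in>P. f (\<sigma> \<circ> sh \<alpha>) (\<tau> \<circ> sh \<beta>)) / (fact m * fact m)"
    unfolding num[symmetric] by (simp add: dprod_def lx ly PS_def)
  also have "\<dots> = (\<Sum>\<alpha>\<in>P. \<Sum>\<beta>\<in>P. D (h#hs) xs ys) / (fact m * fact m)"
    unfolding reord by (simp add: inv cong: sum.cong)
  also have "\<dots> = D (h#hs) xs ys"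
    by (simp add: cP)
  finally show ?case .
qed

lemma bprod_F: "length xs = length hs \<Longrightarrow> length ys = length hs \<Longrightarrow> bprod hs xs ys = F hs xs ys"
  by (simp add: bprod_D D_F)


lemma nths_dl1: "nths l (-{i}) = dl i l"
proof (induction l arbitrary: i)
  case (Cons x l)
  show ?case
  proof (cases i)
    case 0
    have "{k. Suc k \<in> - {0::nat}} = UNIV" by auto
    then show ?thesis using 0 by (simp add: nths_Cons nths_all)
  next
    case (Suc i')
    have "{k. Suc k \<in> - {Suc i'}} = - {i'}" by auto
    then show ?thesis using Suc Cons.IH by (simp add: nths_Cons)
  qed
qed simp

lemma nths_dl2: "i < j \<Longrightarrow> nths l (-{i,j}) = dl i (dl j l)"
proof (induction l arbitrary: i j)
  case (Cons x l)
  obtain j' where j: "j = Suc j'" using Cons.prems by (cases j) auto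
  show ?case
  proof (cases i)
    case 0
    have "{k. Suc k \<in> - {0, Suc j'}} = - {j'}" by auto
    then show ?thesis using 0 j by (simp add: nths_Cons nths_dl1)
  next
    case (Suc i')
    have "{k. Suc k \<in> - {Suc i', Suc j'}} = - {i', j'}" by auto
    then show ?thesis using Suc j Cons.IH[of i' j'] Cons.prems by (simp add: nths_Cons)
  qed
qed simp

lemma dl_replicate: "i < m \<Longrightarrow> dl i (replicate m k) = replicate (m - 1) k"
proof (induction m arbitrary: i)
  case (Suc m)
  show ?case
  proof (cases i)
    case 0
    then show ?thesis by simp
  next
    case (Suc i')
    then have "i' < m" using Suc.prems by simp
    then obtain m' where m: "m = Suc m'" by (cases m) auto
    have "dl i (replicate (Suc m) k) = k # dl i' (replicate m k)" using Suc m by simp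
    also have "\<dots> = k # replicate (m - 1) k" using Suc.IH \<open>i' < m\<close> by simp
    finally show ?thesis using m by simp
  qed
qed simp

lemma part1:
  assumes "length xs = length hs - 1" "length ys = length hs - 1"
  shows "contr (length hs) (length hs) (bprod hs) xs ys =
              (\<Sum>i<length hs. btrace (hs ! i) * bprod (nths hs (- {i})) xs ys)
            - (\<Sum>j<length hs. \<Sum>i<j.
                 dprod 1 1 (bf (\<lambda>x y. bcomp (hs ! j) (hs ! i) x y + bcomp (hs ! i) (hs ! j) x y))
                   (bprod (nths hs (- {i, j}))) xs ys)"
proof (cases "length hs = 0")
  case True
  then show ?thesis by (simp add: contr_def)
next
  case False
  have "contr (length hs) (length hs) (bprod hs) xs ys = (\<Sum>e\<in>Basis. F hs (e#xs) (e#ys))"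
    using False assms by (simp add: contr_def bprod_F)
  also have "\<dots> = (\<Sum>i<length hs. btrace (hs!i) * F (dl i hs) xs ys)
    - (\<Sum>j<length hs. \<Sum>i<j. F ((\<lambda>x y. bcomp (hs!j) (hs!i) x y + bcomp (hs!i) (hs!j) x y) # dl i (dl j hs)) xs ys)"
    by (rule F_contr)
  also have "(\<Sum>i<length hs. btrace (hs!i) * F (dl i hs) xs ys) = (\<Sum>i<length hs. btrace (hs ! i) * bprod (nths hs (- {i})) xs ys)"
    using assms by (intro sum.cong refl) (simp add: nths_dl1 bprod_F)
  also have "(\<Sum>j<length hs. \<Sum>i<j. F ((\<lambda>x y. bcomp (hs!j) (hs!i) x y + bcomp (hs!i) (hs!j) x y) # dl i (dl j hs)) xs ys)
     = (\<Sum>j<length hs. \<Sum>i<j.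
                 dprod 1 1 (bf (\<lambda>x y. bcomp (hs ! j) (hs ! i) x y + bcomp (hs ! i) (hs ! j) x y))
                   (bprod (nths hs (- {i, j}))) xs ys)"
  proof (intro sum.cong refl)
    fix j i assume j: "j \<in> {..<length hs}" and i: "i \<in> {..<j}"
    have l: "length ((\<lambda>x y. bcomp (hs!j) (hs!i) x y + bcomp (hs!i) (hs!j) x y) # dl i (dl j hs)) = length hs - 1"
      using i j by auto
    show "F ((\<lambda>x y. bcomp (hs!j) (hs!i) x y + bcomp (hs!i) (hs!j) x y) # dl i (dl j hs)) xs ys
      = dprod 1 1 (bf (\<lambda>x y. bcomp (hs ! j) (hs ! i) x y + bcomp (hs ! i) (hs ! j) x y))
                   (bprod (nths hs (- {i, j}))) xs ys"
      using i bprod_F[of xs "(\<lambda>x y. bcomp (hs!j) (hs!i) x y + bcomp (hs!i) (hs!j) x y) # dl i (dl j hs)" ys] l assms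
      by (simp add: nths_dl2 del: F.simps)
  qed
  finally show ?thesis .
qed

lemma tri_sum: "(\<Sum>j<m. \<Sum>i<(j::nat). 2 * (c::real)) = real m * (real m - 1) * c"
  by (induction m) (simp_all add: algebra_simps)

lemma dprod_bf_double: "dprod 1 1 (bf (\<lambda>x y. g x y + g x y)) \<theta> xs ys = 2 * dprod 1 1 (bf g) \<theta> xs ys"
proof -
  have "\<And>A B C. A * (B + B) * C = 2 * (A * B * (C::real))" by simp
  then show ?thesis unfolding dprod_def bf_def by (simp only: sum_distrib_left[symmetric] times_divide_eq_right)
qed

theorem mainTheorem13:
  fixes hs :: "(('v::euclidean_space) \<Rightarrow> 'v \<Rightarrow> real) list"
    and k :: "'v \<Rightarrow> 'v \<Rightarrow> real"
    and m :: nat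
  assumes "\<forall>h\<in>set hs. bilinear h"
    and "bilinear k"
  shows "(\<forall>xs ys. length xs = length hs - 1 \<longrightarrow> length ys = length hs - 1 \<longrightarrow>
            contr (length hs) (length hs) (bprod hs) xs ys =
              (\<Sum>i<length hs. btrace (hs ! i) * bprod (nths hs (- {i})) xs ys)
            - (\<Sum>j<length hs. \<Sum>i<j.
                 dprod 1 1 (bf (\<lambda>x y. bcomp (hs ! j) (hs ! i) x y + bcomp (hs ! i) (hs ! j) x y))
                   (bprod (nths hs (- {i, j}))) xs ys))
       \<and> (\<forall>xs ys. length xs = m - 1 \<longrightarrow> length ys = m - 1 \<longrightarrow>
            contr m m (bprod (replicate m k)) xs ys =
              real m * btrace k * bprod (replicate (m - 1) k) xs ys
            - real m * (real m - 1) * dprod 1 1 (bf (bcomp k k)) (bprod (replicate (m - 2) k)) xs ys)"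
  proof (intro conjI allI impI)
  fix xs ys :: "'v list"
  assume "length xs = length hs - 1" "length ys = length hs - 1"
  then show "contr (length hs) (length hs) (bprod hs) xs ys =
              (\<Sum>i<length hs. btrace (hs ! i) * bprod (nths hs (- {i})) xs ys)
            - (\<Sum>j<length hs. \<Sum>i<j.
                 dprod 1 1 (bf (\<lambda>x y. bcomp (hs ! j) (hs ! i) x y + bcomp (hs ! i) (hs ! j) x y))
                   (bprod (nths hs (- {i, j}))) xs ys)" by (rule part1)
next
  fix xs ys :: "'v list"
  assume lx: "length xs = m - 1" and ly: "length ys = m - 1"
  define X where "X = dprod 1 1 (bf (bcomp k k)) (bprod (replicate (m - 2) k)) xs ys"
  have "contr m m (bprod (replicate m k)) xs ys =
              (\<Sum>i<m. btrace (replicate m k ! i) * bprod (nths (replicate m k) (- {i})) xs ys)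
            - (\<Sum>j<m. \<Sum>i<j.
                 dprod 1 1 (bf (\<lambda>x y. bcomp (replicate m k ! j) (replicate m k ! i) x y + bcomp (replicate m k ! i) (replicate m k ! j) x y))
                   (bprod (nths (replicate m k) (- {i, j}))) xs ys)"
    using part1[of xs "replicate m k" ys] lx ly by simp
  also have "(\<Sum>i<m. btrace (replicate m k ! i) * bprod (nths (replicate m k) (- {i})) xs ys)
     = (\<Sum>i<m. btrace k * bprod (replicate (m - 1) k) xs ys)"
    by (intro sum.cong refl) (simp add: nths_dl1 dl_replicate)
  also have "\<dots> = real m * btrace k * bprod (replicate (m - 1) k) xs ys" by simp
  also have "(\<Sum>j<m. \<Sum>i<j.
                 dprod 1 1 (bf (\<lambda>x y. bcomp (replicate m k ! j) (replicate m k ! i) x y + bcomp (replicate m k ! i) (replicate m k ! j) x y))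
                   (bprod (nths (replicate m k) (- {i, j}))) xs ys) = (\<Sum>j<m. \<Sum>i<j. 2 * X)"
  proof (intro sum.cong refl)
    fix j i assume j: "j \<in> {..<m}" and i: "i \<in> {..<j}"
    have "nths (replicate m k) (- {i, j}) = replicate (m - 2) k"
      using i j by (simp add: nths_dl2 dl_replicate)
    then show "dprod 1 1 (bf (\<lambda>x y. bcomp (replicate m k ! j) (replicate m k ! i) x y + bcomp (replicate m k ! i) (replicate m k ! j) x y))
                   (bprod (nths (replicate m k) (- {i, j}))) xs ys = 2 * X"
    proof -
      have "replicate m k ! j = k" "replicate m k ! i = k" using i j by auto
      then show ?thesis unfolding X_def by (simp only: dprod_bf_double \<open>nths (replicate m k) (- {i, j}) = replicate (m - 2) k\<close>)
    qed
  qed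
  also have "\<dots> = real m * (real m - 1) * X" by (rule tri_sum)
  finally show "contr m m (bprod (replicate m k)) xs ys =
              real m * btrace k * bprod (replicate (m - 1) k) xs ys
            - real m * (real m - 1) * dprod 1 1 (bf (bcomp k k)) (bprod (replicate (m - 2) k)) xs ys"
    unfolding X_def .
qed

end
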